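(* Consider a one-site PTM cascade with $n\ge1$ layers and positive total amounts. Let $r(s)=f_0(s)+f_1^Y(s)\in\mathbb{R}(s)$ and write $r=r_1/r_2$ in reduced form with $r_1,r_2\in\mathbb{R}[s]$. Then at every steady state, the value $s=S_n^1$ is a root of the nonzero univariate polynomial $P(s)=r_2(s)\,\overline{E}-r_1(s)$. Moreover, at every steady state all other concentrations are rational functions of $S_n^1$: $S_i^1=f_i(S_n^1)$ for $i=0,\dots,n-1$ (with $E=S_0^1$), $Y_i^0=f_i^Y(S_n^1)$, and $F_i=\frac{\overline{F}_i}{1+\delta_iS_i^1}$, $Y_i^1=\frac{\delta_i\overline{F}_iS_i^1}{1+\delta_iS_i^1}$, $S_i^0=\frac{\lambda_i\overline{F}_iS_i^1}{(1+\delta_iS_i^1)S_{i-1}^1}$, where all denominators occurring (in the recursive definition of $f_i,f_i^Y$ evaluated at $S_n^1$ and in these formulas) are nonzero.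
   Context: A one-site PTM cascade with $n$ layers has chemical species $E=S_0^1$ and, for $i=1,\dots,n$, $S_i^0,S_i^1,F_i,Y_i^0,Y_i^1$, with reactions $S_{i-1}^1+S_i^0 \rightleftharpoons Y_i^0 \to S_{i-1}^1+S_i^1$ (rate constants $a_i^0,b_i^0,c_i^0$) and $F_i+S_i^1\rightleftharpoons Y_i^1\to F_i+S_i^0$ (rate constants $a_i^1,b_i^1,c_i^1$), all positive, mass-action kinetics. Put $\delta_i=a_i^1/(b_i^1+c_i^1)$, $\gamma_i=(c_i^1/c_i^0)\delta_i$, $\lambda_i=\frac{b_i^0+c_i^0}{a_i^0}\gamma_i$. Given total amounts $\overline{E},\overline{F}_i,\overline{S}_i$, a steady state is a real solution of: $Y_i^0=\gamma_iF_iS_i^1$, $Y_i^1=\delta_iF_iS_i^1$, $\lambda_iF_iS_i^1=S_i^0S_{i-1}^1$, $\overline{F}_i=F_i+Y_i^1$, $\overline{S}_i=S_i^0+S_i^1+Y_i^0+Y_i^1+Y_{i+1}^0$ ($i=1,\dots,n$, $Y_{n+1}^0:=0$), $\overline{E}=E+Y_1^0$. Define for $i=1,\dots,n$ the polynomial $d_i(x,y)=(\overline{S}_i-y)-x-\overline{F}_i(\delta_i+\gamma_i)x+\delta_i(\overline{S}_i-y)x-\delta_ix^2$ and $g_i^Y(x)=\frac{\gamma_i\overline{F}_ix}{1+\delta_ix}$. Define rational functions of one variable $s$ recursively: $f_n(s)=s$, $f_{n+1}^Y(s)=0$, and for $i=n,n-1,\dots,1$: $f_i^Y(s)=g_i^Y(f_i(s))$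 and $f_{i-1}(s)=\frac{\lambda_i\overline{F}_if_i(s)}{d_i(f_i(s),f_{i+1}^Y(s))}$. *)

theory Defs
  imports "HOL-Computational_Algebra.Polynomial" "HOL-Computational_Algebra.Fraction_Field"
begin

definition ptm_delta :: "(nat \<Rightarrow> real) \<Rightarrow> (nat \<Rightarrow> real) \<Rightarrow> (nat \<Rightarrow> real) \<Rightarrow> nat \<Rightarrow> real" where
  "ptm_delta a1 b1 c1 i = a1 i / (b1 i + c1 i)"

definition ptm_gamma :: "(nat \<Rightarrow> real) \<Rightarrow> (nat \<Rightarrow> real) \<Rightarrow> (nat \<Rightarrow> real) \<Rightarrow> (nat \<Rightarrow> real) \<Rightarrow> nat \<Rightarrow> real" where
  "ptm_gamma c0 a1 b1 c1 i = (c1 i / c0 i) * ptm_delta a1 b1 c1 i"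

definition ptm_lambda :: "(nat \<Rightarrow> real) \<Rightarrow> (nat \<Rightarrow> real) \<Rightarrow> (nat \<Rightarrow> real) \<Rightarrow> (nat \<Rightarrow> real) \<Rightarrow> (nat \<Rightarrow> real) \<Rightarrow> (nat \<Rightarrow> real) \<Rightarrow> nat \<Rightarrow> real" where
  "ptm_lambda a0 b0 c0 a1 b1 c1 i = ((b0 i + c0 i) / a0 i) * ptm_gamma c0 a1 b1 c1 i"

(* The functions g_i^Y and d_i, over an arbitrary field 'a into which the real
   constants are embedded via c (c = identity for evaluation at a real number,
   c = constant polynomial for the field of rational functions R(s)). *)
definition ptm_gY :: "(real \<Rightarrow> 'a::field) \<Rightarrow> (nat \<Rightarrow> real) \<Rightarrow> (nat \<Rightarrow> real) \<Rightarrow> (nat \<Rightarrow> real) \<Rightarrow> nat \<Rightarrow> 'a \<Rightarrow> 'a" where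
  "ptm_gY c \<delta> \<gamma> Fb i x = c (\<gamma> i) * c (Fb i) * x / (1 + c (\<delta> i) * x)"

definition ptm_d :: "(real \<Rightarrow> 'a::field) \<Rightarrow> (nat \<Rightarrow> real) \<Rightarrow> (nat \<Rightarrow> real) \<Rightarrow> (nat \<Rightarrow> real) \<Rightarrow> (nat \<Rightarrow> real) \<Rightarrow> nat \<Rightarrow> 'a \<Rightarrow> 'a \<Rightarrow> 'a" where
  "ptm_d c \<delta> \<gamma> Fb Sb i x y =
     (c (Sb i) - y) - x - c (Fb i) * (c (\<delta> i) + c (\<gamma> i)) * x
     + c (\<delta> i) * (c (Sb i) - y) * x - c (\<delta> i) * x ^ 2"

(* ptm_h ... n s k = f_{n-k}(s), computed by the downward recursion
   f_n = s,  f_{i-1} = lambda_i Fb_i f_i / d_i(f_i, f_{i+1}^Y),  f_{n+1}^Y = 0. *)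
fun ptm_h :: "(real \<Rightarrow> 'a::field) \<Rightarrow> (nat \<Rightarrow> real) \<Rightarrow> (nat \<Rightarrow> real) \<Rightarrow> (nat \<Rightarrow> real) \<Rightarrow> (nat \<Rightarrow> real) \<Rightarrow> (nat \<Rightarrow> real)
              \<Rightarrow> nat \<Rightarrow> 'a \<Rightarrow> nat \<Rightarrow> 'a" where
  "ptm_h c \<delta> \<gamma> lam Fb Sb n s 0 = s"
| "ptm_h c \<delta> \<gamma> lam Fb Sb n s (Suc 0) =
     c (lam n) * c (Fb n) * s / ptm_d c \<delta> \<gamma> Fb Sb n s 0"
| "ptm_h c \<delta> \<gamma> lam Fb Sb n s (Suc (Suc k)) =
     (let i = n - Suc k; x = ptm_h c \<delta> \<gamma> lam Fb Sb n s (Suc k);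
          y = ptm_gY c \<delta> \<gamma> Fb (n - k) (ptm_h c \<delta> \<gamma> lam Fb Sb n s k)
      in c (lam i) * c (Fb i) * x / ptm_d c \<delta> \<gamma> Fb Sb i x y)"

definition ptm_f :: "(real \<Rightarrow> 'a::field) \<Rightarrow> (nat \<Rightarrow> real) \<Rightarrow> (nat \<Rightarrow> real) \<Rightarrow> (nat \<Rightarrow> real) \<Rightarrow> (nat \<Rightarrow> real) \<Rightarrow> (nat \<Rightarrow> real)
              \<Rightarrow> nat \<Rightarrow> 'a \<Rightarrow> nat \<Rightarrow> 'a" where
  "ptm_f c \<delta> \<gamma> lam Fb Sb n s i = ptm_h c \<delta> \<gamma> lam Fb Sb n s (n - i)"

definition ptm_fY :: "(real \<Rightarrow> 'a::field) \<Rightarrow> (nat \<Rightarrow> real) \<Rightarrow> (nat \<Rightarrow> real) \<Rightarrow> (nat \<Rightarrow> real) \<Rightarrow> (nat \<Rightarrow> real) \<Rightarrow> (nat \<Rightarrow> real)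
              \<Rightarrow> nat \<Rightarrow> 'a \<Rightarrow> nat \<Rightarrow> 'a" where
  "ptm_fY c \<delta> \<gamma> lam Fb Sb n s i =
     (if n < i then 0 else ptm_gY c \<delta> \<gamma> Fb i (ptm_f c \<delta> \<gamma> lam Fb Sb n s i))"

type_synonym ratfun = "real poly fract"

definition rconst :: "real \<Rightarrow> ratfun" where
  "rconst a = Fract [:a:] 1"

definition rvar :: ratfun where
  "rvar = Fract [:0, 1:] 1"

(* steady-state equations; E = S1 0, Y_{n+1}^0 := 0 *)
definition ptm_steady_state ::
  "nat \<Rightarrow> (nat \<Rightarrow> real) \<Rightarrow> (nat \<Rightarrow> real) \<Rightarrow> (nat \<Rightarrow> real) \<Rightarrow> (nat \<Rightarrow> real) \<Rightarrow> (nat \<Rightarrow> real) \<Rightarrow> real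
   \<Rightarrow> (nat \<Rightarrow> real) \<Rightarrow> (nat \<Rightarrow> real) \<Rightarrow> (nat \<Rightarrow> real) \<Rightarrow> (nat \<Rightarrow> real) \<Rightarrow> (nat \<Rightarrow> real) \<Rightarrow> bool" where
  "ptm_steady_state n \<delta> \<gamma> lam Fb Sb Eb S0 S1 F Y0 Y1 \<longleftrightarrow>
     (\<forall>i\<in>{1..n}.
        Y0 i = \<gamma> i * F i * S1 i \<and>
        Y1 i = \<delta> i * F i * S1 i \<and>
        lam i * F i * S1 i = S0 i * S1 (i - 1) \<and>
        Fb i = F i + Y1 i \<and>
        Sb i = S0 i + S1 i + Y0 i + Y1 i + (if i = n then 0 else Y0 (i + 1))) \<and>
     Eb = S1 0 + Y0 1"

end

theory Submission
  imports Defs "HOL-Computational_Algebra.Field_as_Ring" "HOL-Computational_Algebra.Polynomial_Factorial"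
begin

definition rel :: "real \<Rightarrow> ratfun \<Rightarrow> real \<Rightarrow> bool" where
  "rel s R v \<longleftrightarrow> (\<exists>p q. R = Fract p q \<and> poly q s \<noteq> 0 \<and> v = poly p s / poly q s)"

lemma rel_const: "rel s (rconst a) a"
  unfolding rel_def rconst_def by (rule exI[where x="[:a:]"], rule exI[where x=1]) simp

lemma rel_var: "rel s rvar s"
  unfolding rel_def rvar_def by (rule exI[where x="[:0,1:]"], rule exI[where x=1]) simp

lemma rel_zero: "rel s 0 0"
  unfolding rel_def Zero_fract_def by (rule exI[where x=0], rule exI[where x=1]) simp

lemma rel_one: "rel s 1 1"
  unfolding rel_def One_fract_def by (rule exI[where x=1], rule exI[where x=1]) simp

lemma rel_add: "rel s A a \<Longrightarrow> rel s B b \<Longrightarrow> rel s (A + B) (a + b)"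
  unfolding rel_def
proof (elim exE conjE)
  fix p q p' q' assume h: "A = Fract p q" "poly q s \<noteq> 0" "a = poly p s / poly q s"
     "B = Fract p' q'" "poly q' s \<noteq> 0" "b = poly p' s / poly q' s"
  have "q \<noteq> 0" "q' \<noteq> 0" using h by auto
  show "\<exists>p q. A + B = Fract p q \<and> poly q s \<noteq> 0 \<and> a + b = poly p s / poly q s"
  proof (rule exI[where x="p * q' + p' * q"], rule exI[where x="q * q'"], intro conjI)
    show "A + B = Fract (p * q' + p' * q) (q * q')" using h(1,4) \<open>q \<noteq> 0\<close> \<open>q' \<noteq> 0\<close> by simp
    show "poly (q * q') s \<noteq> 0" using h(2,5) by simp
    show "a + b = poly (p * q' + p' * q) s / poly (q * q') s" unfolding h(3,6) poly_mult poly_add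
      using h(2,5) by (rule add_frac_eq)
  qed
qed

lemma rel_diff: "rel s A a \<Longrightarrow> rel s B b \<Longrightarrow> rel s (A - B) (a - b)"
  unfolding rel_def
proof (elim exE conjE)
  fix p q p' q' assume h: "A = Fract p q" "poly q s \<noteq> 0" "a = poly p s / poly q s"
     "B = Fract p' q'" "poly q' s \<noteq> 0" "b = poly p' s / poly q' s"
  have "q \<noteq> 0" "q' \<noteq> 0" using h by auto
  show "\<exists>p q. A - B = Fract p q \<and> poly q s \<noteq> 0 \<and> a - b = poly p s / poly q s"
  proof (rule exI[where x="p * q' - p' * q"], rule exI[where x="q * q'"], intro conjI)
    show "A - B = Fract (p * q' - p' * q) (q * q')" using h(1,4) \<open>q \<noteq> 0\<close> \<open>q' \<noteq> 0\<close> by simp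
    show "poly (q * q') s \<noteq> 0" using h(2,5) by simp
    show "a - b = poly (p * q' - p' * q) s / poly (q * q') s" unfolding h(3,6) poly_mult poly_diff
      using h(2,5) by (rule diff_frac_eq)
  qed
qed

lemma rel_mult: "rel s A a \<Longrightarrow> rel s B b \<Longrightarrow> rel s (A * B) (a * b)"
  unfolding rel_def
proof (elim exE conjE)
  fix p q p' q' assume h: "A = Fract p q" "poly q s \<noteq> 0" "a = poly p s / poly q s"
     "B = Fract p' q'" "poly q' s \<noteq> 0" "b = poly p' s / poly q' s"
  show "\<exists>p q. A * B = Fract p q \<and> poly q s \<noteq> 0 \<and> a * b = poly p s / poly q s"
  proof (rule exI[where x="p * p'"], rule exI[where x="q * q'"], intro conjI)
    show "A * B = Fract (p * p') (q * q')" using h(1,4) by simp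
    show "poly (q * q') s \<noteq> 0" using h(2,5) by simp
    show "a * b = poly (p * p') s / poly (q * q') s" unfolding h(3,6) poly_mult
      by (rule times_divide_times_eq)
  qed
qed

lemma rel_div: "rel s A a \<Longrightarrow> rel s B b \<Longrightarrow> b \<noteq> 0 \<Longrightarrow> rel s (A / B) (a / b)"
  unfolding rel_def
proof (elim exE conjE)
  fix p q p' q' assume h: "A = Fract p q" "poly q s \<noteq> 0" "a = poly p s / poly q s"
     "B = Fract p' q'" "poly q' s \<noteq> 0" "b = poly p' s / poly q' s" and b: "b \<noteq> 0"
  have "poly p' s \<noteq> 0" using h b by auto
  show "\<exists>p q. A / B = Fract p q \<and> poly q s \<noteq> 0 \<and> a / b = poly p s / poly q s"
  proof (rule exI[where x="p * q'"], rule exI[where x="q * p'"], intro conjI)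
    show "A / B = Fract (p * q') (q * p')" using h(1,4) by simp
    show "poly (q * p') s \<noteq> 0" using h(2) \<open>poly p' s \<noteq> 0\<close> by simp
    show "a / b = poly (p * q') s / poly (q * p') s" unfolding h(3,6) poly_mult
      by (rule divide_divide_times_eq)
  qed
qed

lemma rel_pow2: "rel s A a \<Longrightarrow> rel s (A ^ 2) (a ^ 2)"
  by (simp add: power2_eq_square rel_mult)

lemma rel_gY: "rel s X x \<Longrightarrow> 1 + \<delta> i * x \<noteq> 0 \<Longrightarrow>
   rel s (ptm_gY rconst \<delta> \<gamma> Fb i X) (ptm_gY (\<lambda>x. x) \<delta> \<gamma> Fb i x)"
  unfolding ptm_gY_def
  by (intro rel_div rel_mult rel_const rel_add rel_one) auto

lemma rel_d: "rel s X x \<Longrightarrow> rel s Y y \<Longrightarrow>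
   rel s (ptm_d rconst \<delta> \<gamma> Fb Sb i X Y) (ptm_d (\<lambda>x. x) \<delta> \<gamma> Fb Sb i x y)"
  unfolding ptm_d_def
  by (intro rel_div rel_mult rel_const rel_add rel_diff rel_pow2) auto

lemma rel_final:
  assumes "rel s (Fract r1 r2) v" "r2 \<noteq> 0" "coprime r1 r2"
  shows "poly r2 s \<noteq> 0 \<and> v = poly r1 s / poly r2 s"
proof -
  obtain p q where h: "Fract r1 r2 = Fract p q" "poly q s \<noteq> 0" "v = poly p s / poly q s"
    using assms(1) unfolding rel_def by blast
  have q: "q \<noteq> 0" using h by auto
  have e: "r1 * q = p * r2" using h(1) q assms(2) by (simp add: eq_fract)
  have "r2 dvd r1 * q" using e by simp
  hence "r2 dvd q" using coprime_dvd_mult_right_iff[of r2 r1 q] assms(3) coprime_commute[of r1 r2] by blast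
  then obtain k where k: "q = r2 * k" by blast
  have "p * r2 = r1 * k * r2" using e k by (metis mult.assoc mult.commute)
  hence pk: "p = r1 * k" using assms(2) by (metis mult_cancel_right)
  have "poly q s = poly r2 s * poly k s" using k by simp
  with h(2) have "poly r2 s \<noteq> 0" "poly k s \<noteq> 0" by auto
  thus ?thesis using h(3) pk k by simp
qed


lemma rel_h:
  fixes dl gm lm Fb Sb :: "nat \<Rightarrow> real" and n :: nat and s :: real
  assumes H: "\<forall>i\<in>{1..n}. ptm_d (\<lambda>x. x) dl gm Fb Sb i (ptm_f (\<lambda>x. x) dl gm lm Fb Sb n s i)
                (ptm_fY (\<lambda>x. x) dl gm lm Fb Sb n s (i + 1)) \<noteq> 0 \<and>
              1 + dl i * ptm_f (\<lambda>x. x) dl gm lm Fb Sb n s i \<noteq> 0"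
  shows "k \<le> n \<Longrightarrow> rel s (ptm_h rconst dl gm lm Fb Sb n rvar k) (ptm_h (\<lambda>x. x) dl gm lm Fb Sb n s k)"
proof (induction k rule: less_induct)
  case (less k)
  show ?case
  proof (cases k)
    case 0
    then show ?thesis by (simp add: rel_var)
  next
    case (Suc k1)
    show ?thesis
    proof (cases k1)
      case 0
      have nn: "n \<in> {1..n}" using less.prems Suc 0 by simp
      have Hn: "ptm_d (\<lambda>x. x) dl gm Fb Sb n s 0 \<noteq> 0"
        using H[rule_format, OF nn] by (simp add: ptm_f_def ptm_fY_def)
      show ?thesis unfolding Suc 0 ptm_h.simps
        by (intro rel_div rel_mult rel_const rel_d rel_var rel_zero Hn)
    next
      case (Suc k')
      have kk: "Suc (Suc k') \<le> n" using less.prems \<open>k = Suc k1\<close> Suc by simp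
      define i where "i = n - Suc k'"
      have i1: "i \<in> {1..n}" using kk i_def by auto
      have e1: "n - i = Suc k'" using kk i_def by simp
      have e2: "i + 1 = n - k'" using kk i_def by simp
      have e3: "n - (n - k') = k'" using kk by simp
      have nl: "\<not> n < n - k'" by simp
      have i2: "n - k' \<in> {1..n}" using kk by auto
      have f1: "ptm_f (\<lambda>x. x) dl gm lm Fb Sb n s i = ptm_h (\<lambda>x. x) dl gm lm Fb Sb n s (Suc k')"
        unfolding ptm_f_def e1 ..
      have f2: "ptm_fY (\<lambda>x. x) dl gm lm Fb Sb n s (i + 1) =
          ptm_gY (\<lambda>x. x) dl gm Fb (n - k') (ptm_h (\<lambda>x. x) dl gm lm Fb Sb n s k')"
        unfolding ptm_fY_def e2 ptm_f_def e3 using nl by simp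
      have f3: "ptm_f (\<lambda>x. x) dl gm lm Fb Sb n s (n - k') = ptm_h (\<lambda>x. x) dl gm lm Fb Sb n s k'"
        unfolding ptm_f_def e3 ..
      have Hi: "ptm_d (\<lambda>x. x) dl gm Fb Sb i (ptm_h (\<lambda>x. x) dl gm lm Fb Sb n s (Suc k'))
                (ptm_gY (\<lambda>x. x) dl gm Fb (n - k') (ptm_h (\<lambda>x. x) dl gm lm Fb Sb n s k')) \<noteq> 0"
        using H[rule_format, OF i1] unfolding f1 f2 by blast
      have Hi2: "1 + dl (n - k') * ptm_h (\<lambda>x. x) dl gm lm Fb Sb n s k' \<noteq> 0"
        using H[rule_format, OF i2] unfolding f3 by blast
      have IH1: "rel s (ptm_h rconst dl gm lm Fb Sb n rvar (Suc k')) (ptm_h (\<lambda>x. x) dl gm lm Fb Sb n s (Suc k'))"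
        using less.IH[of "Suc k'"] kk \<open>k = Suc k1\<close> Suc by simp
      have IH0: "rel s (ptm_h rconst dl gm lm Fb Sb n rvar k') (ptm_h (\<lambda>x. x) dl gm lm Fb Sb n s k')"
        using less.IH[of "k'"] kk \<open>k = Suc k1\<close> Suc by simp
      show ?thesis unfolding \<open>k = Suc k1\<close> Suc ptm_h.simps Let_def i_def[symmetric]
        by (intro rel_div rel_mult rel_const rel_d rel_gY IH1 IH0 Hi Hi2)
    qed
  qed
qed

lemma rel_sum:
  fixes dl gm lm Fb Sb :: "nat \<Rightarrow> real" and n :: nat and s :: real
  assumes H: "\<forall>i\<in>{1..n}. ptm_d (\<lambda>x. x) dl gm Fb Sb i (ptm_f (\<lambda>x. x) dl gm lm Fb Sb n s i)
                (ptm_fY (\<lambda>x. x) dl gm lm Fb Sb n s (i + 1)) \<noteq> 0 \<and>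
              1 + dl i * ptm_f (\<lambda>x. x) dl gm lm Fb Sb n s i \<noteq> 0"
    and n: "n \<ge> 1"
  shows "rel s (ptm_f rconst dl gm lm Fb Sb n rvar 0 + ptm_fY rconst dl gm lm Fb Sb n rvar 1)
           (ptm_f (\<lambda>x. x) dl gm lm Fb Sb n s 0 + ptm_fY (\<lambda>x. x) dl gm lm Fb Sb n s 1)"
proof -
  have a: "rel s (ptm_f rconst dl gm lm Fb Sb n rvar 0) (ptm_f (\<lambda>x. x) dl gm lm Fb Sb n s 0)"
    unfolding ptm_f_def by (rule rel_h[OF H]) simp
  have b0: "rel s (ptm_f rconst dl gm lm Fb Sb n rvar 1) (ptm_f (\<lambda>x. x) dl gm lm Fb Sb n s 1)"
    unfolding ptm_f_def by (rule rel_h[OF H]) simp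
  have c: "1 + dl 1 * ptm_f (\<lambda>x. x) dl gm lm Fb Sb n s 1 \<noteq> 0" using H n by auto
  have b: "rel s (ptm_fY rconst dl gm lm Fb Sb n rvar 1) (ptm_fY (\<lambda>x. x) dl gm lm Fb Sb n s 1)"
    using n rel_gY[where \<delta>=dl and i=1 and \<gamma>=gm and Fb=Fb, OF b0 c] unfolding ptm_fY_def by simp
  show ?thesis by (rule rel_add[OF a b])
qed

lemma h_zero: "ptm_h (\<lambda>x. x) dl gm lm Fb Sb n 0 k = (0::real)"
  by (induction "(\<lambda>x::real. x)" dl gm lm Fb Sb n "0::real" k rule: ptm_h.induct) (simp_all add: Let_def)

lemma layer:
  fixes Ya Yb F x Sz e Fb Sb y dl gm lm :: real
  assumes "Ya = gm * F * x" "Yb = dl * F * x" "lm * F * x = Sz * e" "Fb = F + Yb"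
    "Sb = Sz + x + Ya + Yb + y" "e \<noteq> 0" "lm > 0" "Fb > 0" "x \<noteq> 0"
  shows "(Sb - y) - x - Fb * (dl + gm) * x + dl * (Sb - y) * x - dl * x ^ 2 \<noteq> 0 \<and>
         lm * Fb * x / ((Sb - y) - x - Fb * (dl + gm) * x + dl * (Sb - y) * x - dl * x ^ 2) = e"
proof -
  define D where "D = (Sb - y) - x - Fb * (dl + gm) * x + dl * (Sb - y) * x - dl * x ^ 2"
  have "D = (1 + dl * x) * Sz" unfolding D_def using assms(1-5)
    by (simp add: power2_eq_square algebra_simps)
  hence "D * e = (1 + dl * x) * (Sz * e)" by simp
  also have "\<dots> = (1 + dl * x) * (lm * F * x)" using assms(3) by simp
  also have "\<dots> = lm * Fb * x" using assms(2,4) by (simp add: algebra_simps)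
  finally have De: "D * e = lm * Fb * x" .
  have "lm * Fb * x \<noteq> 0" using assms(7-9) by simp
  hence "D \<noteq> 0" using De by auto
  moreover have "lm * Fb * x / D = e" using De \<open>D \<noteq> 0\<close> by (simp add: field_simps)
  ultimately show ?thesis unfolding D_def by simp
qed

theorem mainTheorem2:
  fixes n :: nat
    and a0 b0 c0 a1 b1 c1 Fb Sb :: "nat \<Rightarrow> real"
    and Eb :: real
    and r1 r2 :: "real poly"
  defines "\<delta> \<equiv> ptm_delta a1 b1 c1"
      and "\<gamma> \<equiv> ptm_gamma c0 a1 b1 c1"
      and "lam \<equiv> ptm_lambda a0 b0 c0 a1 b1 c1"
  assumes n: "n \<ge> 1"
    and rates: "\<forall>i\<in>{1..n}. a0 i > 0 \<and> b0 i > 0 \<and> c0 i > 0 \<and> a1 i > 0 \<and> b1 i > 0 \<and> c1 i > 0"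
    and totals: "Eb > 0" "\<forall>i\<in>{1..n}. Fb i > 0 \<and> Sb i > 0"
    and reduced: "r2 \<noteq> 0" "coprime r1 r2"
    and r_eq: "ptm_f rconst \<delta> \<gamma> lam Fb Sb n rvar 0 + ptm_fY rconst \<delta> \<gamma> lam Fb Sb n rvar 1 = Fract r1 r2"
  shows "smult Eb r2 - r1 \<noteq> 0 \<and>
    (\<forall>S0 S1 F Y0 Y1. ptm_steady_state n \<delta> \<gamma> lam Fb Sb Eb S0 S1 F Y0 Y1 \<longrightarrow>
       poly (smult Eb r2 - r1) (S1 n) = 0 \<and>
       (\<forall>i\<in>{1..n}.
          ptm_d (\<lambda>x. x) \<delta> \<gamma> Fb Sb i (ptm_f (\<lambda>x. x) \<delta> \<gamma> lam Fb Sb n (S1 n) i)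
                (ptm_fY (\<lambda>x. x) \<delta> \<gamma> lam Fb Sb n (S1 n) (i + 1)) \<noteq> 0 \<and>
          1 + \<delta> i * ptm_f (\<lambda>x. x) \<delta> \<gamma> lam Fb Sb n (S1 n) i \<noteq> 0) \<and>
       (\<forall>i<n. S1 i = ptm_f (\<lambda>x. x) \<delta> \<gamma> lam Fb Sb n (S1 n) i) \<and>
       (\<forall>i\<in>{1..n}.
          Y0 i = ptm_fY (\<lambda>x. x) \<delta> \<gamma> lam Fb Sb n (S1 n) i \<and>
          1 + \<delta> i * S1 i \<noteq> 0 \<and> S1 (i - 1) \<noteq> 0 \<and>
          F i = Fb i / (1 + \<delta> i * S1 i) \<and>
          Y1 i = \<delta> i * Fb i * S1 i / (1 + \<delta> i * S1 i) \<and>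
          S0 i = lam i * Fb i * S1 i / ((1 + \<delta> i * S1 i) * S1 (i - 1))))"
proof -
  have lampos: "\<And>i. i \<in> {1..n} \<Longrightarrow> lam i > 0"
    using rates unfolding lam_def ptm_lambda_def ptm_gamma_def ptm_delta_def
    by (auto intro!: mult_pos_pos divide_pos_pos add_pos_pos)
  have Fbpos: "\<And>i. i \<in> {1..n} \<Longrightarrow> Fb i > 0" and Sbpos: "\<And>i. i \<in> {1..n} \<Longrightarrow> Sb i > 0"
    using totals(2) by auto
  \<comment> \<open>nonvanishing of P, via evaluation at 0\<close>
  have H0: "\<forall>i\<in>{1..n}. ptm_d (\<lambda>x. x) \<delta> \<gamma> Fb Sb i (ptm_f (\<lambda>x. x) \<delta> \<gamma> lam Fb Sb n 0 i)
                (ptm_fY (\<lambda>x. x) \<delta> \<gamma> lam Fb Sb n 0 (i + 1)) \<noteq> 0 \<and>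
              1 + \<delta> i * ptm_f (\<lambda>x. x) \<delta> \<gamma> lam Fb Sb n 0 i \<noteq> 0"
  proof
    fix i assume i: "i \<in> {1..n}"
    have "Sb i > 0" using Sbpos[OF i] .
    thus "ptm_d (\<lambda>x. x) \<delta> \<gamma> Fb Sb i (ptm_f (\<lambda>x. x) \<delta> \<gamma> lam Fb Sb n 0 i)
                (ptm_fY (\<lambda>x. x) \<delta> \<gamma> lam Fb Sb n 0 (i + 1)) \<noteq> 0 \<and>
              1 + \<delta> i * ptm_f (\<lambda>x. x) \<delta> \<gamma> lam Fb Sb n 0 i \<noteq> 0"
      by (simp add: ptm_f_def ptm_fY_def h_zero ptm_gY_def ptm_d_def)
  qed
  have "rel 0 (Fract r1 r2) (ptm_f (\<lambda>x. x) \<delta> \<gamma> lam Fb Sb n 0 0 + ptm_fY (\<lambda>x. x) \<delta> \<gamma> lam Fb Sb n 0 1)"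
    using rel_sum[OF H0 n] r_eq by simp
  moreover have "ptm_f (\<lambda>x. x) \<delta> \<gamma> lam Fb Sb n 0 0 + ptm_fY (\<lambda>x. x) \<delta> \<gamma> lam Fb Sb n 0 1 = 0"
    by (simp add: ptm_f_def ptm_fY_def h_zero ptm_gY_def)
  ultimately have "rel 0 (Fract r1 r2) 0" by simp
  from rel_final[OF this reduced] have r20: "poly r2 0 \<noteq> 0" "poly r1 0 = 0" by auto
  have nz: "smult Eb r2 - r1 \<noteq> 0"
  proof
    assume "smult Eb r2 - r1 = 0"
    hence "poly (smult Eb r2 - r1) 0 = 0" by simp
    hence "Eb * poly r2 0 = 0" using r20 by simp
    thus False using r20 totals(1) by simp
  qed
  have main: "\<forall>S0 S1 F Y0 Y1. ptm_steady_state n \<delta> \<gamma> lam Fb Sb Eb S0 S1 F Y0 Y1 \<longrightarrow>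
       poly (smult Eb r2 - r1) (S1 n) = 0 \<and>
       (\<forall>i\<in>{1..n}.
          ptm_d (\<lambda>x. x) \<delta> \<gamma> Fb Sb i (ptm_f (\<lambda>x. x) \<delta> \<gamma> lam Fb Sb n (S1 n) i)
                (ptm_fY (\<lambda>x. x) \<delta> \<gamma> lam Fb Sb n (S1 n) (i + 1)) \<noteq> 0 \<and>
          1 + \<delta> i * ptm_f (\<lambda>x. x) \<delta> \<gamma> lam Fb Sb n (S1 n) i \<noteq> 0) \<and>
       (\<forall>i<n. S1 i = ptm_f (\<lambda>x. x) \<delta> \<gamma> lam Fb Sb n (S1 n) i) \<and>
       (\<forall>i\<in>{1..n}.
          Y0 i = ptm_fY (\<lambda>x. x) \<delta> \<gamma> lam Fb Sb n (S1 n) i \<and>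
          1 + \<delta> i * S1 i \<noteq> 0 \<and> S1 (i - 1) \<noteq> 0 \<and>
          F i = Fb i / (1 + \<delta> i * S1 i) \<and>
          Y1 i = \<delta> i * Fb i * S1 i / (1 + \<delta> i * S1 i) \<and>
          S0 i = lam i * Fb i * S1 i / ((1 + \<delta> i * S1 i) * S1 (i - 1)))"
  proof (intro allI impI)
    fix S0 S1 F Y0 Y1
    assume ss: "ptm_steady_state n \<delta> \<gamma> lam Fb Sb Eb S0 S1 F Y0 Y1"
    have L: "Y0 i = \<gamma> i * F i * S1 i \<and> Y1 i = \<delta> i * F i * S1 i \<and>
        lam i * F i * S1 i = S0 i * S1 (i - 1) \<and> Fb i = F i + Y1 i \<and>
        Sb i = S0 i + S1 i + Y0 i + Y1 i + (if i = n then 0 else Y0 (i + 1))"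
      if "i \<in> {1..n}" for i
      using ss that unfolding ptm_steady_state_def by blast
    have EbE: "Eb = S1 0 + Y0 1" using ss unfolding ptm_steady_state_def by blast
    have B1: "1 + \<delta> i * S1 i \<noteq> 0 \<and> F i = Fb i / (1 + \<delta> i * S1 i) \<and> F i \<noteq> 0"
      if i: "i \<in> {1..n}" for i
    proof -
      have e: "Fb i = F i * (1 + \<delta> i * S1 i)" using L[OF i] by (simp add: algebra_simps)
      have "Fb i \<noteq> 0" using Fbpos[OF i] by simp
      hence "1 + \<delta> i * S1 i \<noteq> 0" "F i \<noteq> 0" using e by auto
      thus ?thesis using e by simp
    qed
    have up: "S1 i = 0" if i: "i \<in> {1..n}" and z: "S1 (i - 1) = 0" for i
    proof -
      have "lam i * F i * S1 i = 0" using L[OF i] z by simp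
      moreover have "F i \<noteq> 0" using B1[OF i] by blast
      ultimately show ?thesis using lampos[OF i] by simp
    qed
    have down: "S1 (i - 1) = 0" if i: "i \<in> {1..n}" and z: "S1 i = 0"
        and z2: "i = n \<or> S1 (i + 1) = 0" for i
    proof -
      have y: "(if i = n then 0 else Y0 (i + 1)) = 0"
      proof (cases "i = n")
        case False
        hence "i + 1 \<in> {1..n}" using i by auto
        thus ?thesis using L[of "i+1"] z2 False by simp
      qed simp
      have "Sb i = S0 i" using L[OF i] z y by simp
      hence "S0 i \<noteq> 0" using Sbpos[OF i] by simp
      moreover have "S0 i * S1 (i - 1) = 0" using L[OF i] z by simp
      ultimately show ?thesis by simp
    qed
    have B2: "S1 j \<noteq> 0" if j: "j \<le> n" for j
    proof
      assume z: "S1 j = 0"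
      have upr: "\<forall>m. j \<le> m \<and> m \<le> n \<longrightarrow> S1 m = 0"
      proof (intro allI impI)
        fix m assume "j \<le> m \<and> m \<le> n"
        thus "S1 m = 0"
        proof (induction m)
          case 0 thus ?case using z by simp
        next
          case (Suc m)
          show ?case
          proof (cases "j = Suc m")
            case True thus ?thesis using z by simp
          next
            case False
            hence "S1 m = 0" using Suc by simp
            thus ?thesis using up[of "Suc m"] Suc.prems by simp
          qed
        qed
      qed
      have all: "\<forall>m. n - d \<le> m \<and> m \<le> n \<longrightarrow> S1 m = 0" if "d \<le> n" for d
        using that
      proof (induction d)
        case 0 thus ?case using upr j by auto
      next
        case (Suc d)
        show ?case
        proof (intro allI impI)
          fix m assume m: "n - Suc d \<le> m \<and> m \<le> n"
          show "S1 m = 0"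
          proof (cases "n - d \<le> m")
            case True thus ?thesis using Suc m by simp
          next
            case False
            hence mm: "m = n - Suc d" using m Suc.prems by linarith
            have i: "n - d \<in> {1..n}" using Suc.prems by auto
            have z1: "S1 (n - d) = 0" using Suc by simp
            have IHd: "\<forall>m. n - d \<le> m \<and> m \<le> n \<longrightarrow> S1 m = 0" using Suc by simp
            have z2: "n - d = n \<or> S1 (n - d + 1) = 0"
            proof (cases "d = 0")
              case False
              hence "n - d + 1 \<le> n" using Suc.prems by simp
              thus ?thesis using IHd[rule_format, of "n - d + 1"] by simp
            qed simp
            have "S1 (n - d - 1) = 0" by (rule down[OF i z1 z2])
            moreover have "n - d - 1 = m" using mm Suc.prems by simp
            ultimately show ?thesis by simp
          qed
        qed
      qed
      have "S1 0 = 0" "S1 1 = 0" using all[of n] n by auto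
      hence "Eb = 0" using EbE L[of 1] n by simp
      thus False using totals(1) by simp
    qed
    have gY: "ptm_gY (\<lambda>x. x) \<delta> \<gamma> Fb i (S1 i) = Y0 i" if i: "i \<in> {1..n}" for i
    proof -
      have "Y0 i = \<gamma> i * (Fb i / (1 + \<delta> i * S1 i)) * S1 i" using L[OF i] B1[OF i] by simp
      thus ?thesis unfolding ptm_gY_def by simp
    qed
    have LY: "ptm_d (\<lambda>x. x) \<delta> \<gamma> Fb Sb i (S1 i) (if i = n then 0 else Y0 (i + 1)) \<noteq> 0 \<and>
        lam i * Fb i * S1 i / ptm_d (\<lambda>x. x) \<delta> \<gamma> Fb Sb i (S1 i) (if i = n then 0 else Y0 (i + 1)) = S1 (i - 1)"
      if i: "i \<in> {1..n}" for i
      unfolding ptm_d_def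
      apply (rule layer[where Ya="Y0 i" and gm="\<gamma> i" and F="F i" and x="S1 i" and Yb="Y1 i" and dl="\<delta> i" and lm="lam i" and Sz="S0 i" and e="S1 (i - 1)" and Fb="Fb i" and Sb="Sb i"])
      using L[OF i] B2[of i] B2[of "i - 1"] i lampos[OF i] Fbpos[OF i] by auto
    have B3: "S1 (n - k) = ptm_h (\<lambda>x. x) \<delta> \<gamma> lam Fb Sb n (S1 n) k" if "k \<le> n" for k
      using that
    proof (induction k rule: less_induct)
      case (less k)
      show ?case
      proof (cases k)
        case 0 thus ?thesis by simp
      next
        case (Suc k1)
        show ?thesis
        proof (cases k1)
          case 0
          have i: "n \<in> {1..n}" using n by simp
          show ?thesis using LY[OF i] \<open>k = Suc k1\<close> 0 by simp
        next
          case (Suc k')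
          have kk: "Suc (Suc k') \<le> n" using less.prems \<open>k = Suc k1\<close> Suc by simp
          define i where "i = n - Suc k'"
          have i1: "i \<in> {1..n}" using kk i_def by auto
          have i2: "i + 1 \<in> {1..n}" using kk i_def by auto
          have ine: "i \<noteq> n" using kk i_def by simp
          have h1: "ptm_h (\<lambda>x. x) \<delta> \<gamma> lam Fb Sb n (S1 n) (Suc k') = S1 i"
            using less.IH[of "Suc k'"] kk \<open>k = Suc k1\<close> Suc i_def by simp
          have h0: "ptm_h (\<lambda>x. x) \<delta> \<gamma> lam Fb Sb n (S1 n) k' = S1 (i + 1)"
            using less.IH[of "k'"] kk \<open>k = Suc k1\<close> Suc i_def by (simp add: Suc_diff_Suc)
          have nk: "n - k' = i + 1" using kk i_def by simp
          have "ptm_h (\<lambda>x. x) \<delta> \<gamma> lam Fb Sb n (S1 n) k =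
              lam i * Fb i * S1 i / ptm_d (\<lambda>x. x) \<delta> \<gamma> Fb Sb i (S1 i) (Y0 (i + 1))"
            unfolding \<open>k = Suc k1\<close> Suc ptm_h.simps Let_def i_def[symmetric] h1 h0 nk gY[OF i2] by simp
          also have "\<dots> = S1 (i - 1)" using LY[OF i1] ine by simp
          also have "i - 1 = n - k" using i_def kk \<open>k = Suc k1\<close> Suc by simp
          finally show ?thesis by simp
        qed
      qed
    qed
    have fS: "ptm_f (\<lambda>x. x) \<delta> \<gamma> lam Fb Sb n (S1 n) i = S1 i" if "i \<le> n" for i
      using B3[of "n - i"] that by (simp add: ptm_f_def)
    have fYS: "ptm_fY (\<lambda>x. x) \<delta> \<gamma> lam Fb Sb n (S1 n) (i + 1) = (if i = n then 0 else Y0 (i + 1))"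
      if i: "i \<in> {1..n}" for i
    proof (cases "i = n")
      case False
      hence i2: "i + 1 \<in> {1..n}" using i by auto
      thus ?thesis using False by (simp add: ptm_fY_def fS gY)
    qed (simp add: ptm_fY_def)
    have fYS1: "ptm_fY (\<lambda>x. x) \<delta> \<gamma> lam Fb Sb n (S1 n) i = Y0 i" if i: "i \<in> {1..n}" for i
      using i by (simp add: ptm_fY_def fS gY)
    have HS: "\<forall>i\<in>{1..n}. ptm_d (\<lambda>x. x) \<delta> \<gamma> Fb Sb i (ptm_f (\<lambda>x. x) \<delta> \<gamma> lam Fb Sb n (S1 n) i)
                (ptm_fY (\<lambda>x. x) \<delta> \<gamma> lam Fb Sb n (S1 n) (i + 1)) \<noteq> 0 \<and>
              1 + \<delta> i * ptm_f (\<lambda>x. x) \<delta> \<gamma> lam Fb Sb n (S1 n) i \<noteq> 0"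
      using LY B1 fS fYS by auto
    have "rel (S1 n) (Fract r1 r2) (ptm_f (\<lambda>x. x) \<delta> \<gamma> lam Fb Sb n (S1 n) 0 + ptm_fY (\<lambda>x. x) \<delta> \<gamma> lam Fb Sb n (S1 n) 1)"
      using rel_sum[OF HS n] r_eq by simp
    moreover have "ptm_f (\<lambda>x. x) \<delta> \<gamma> lam Fb Sb n (S1 n) 0 + ptm_fY (\<lambda>x. x) \<delta> \<gamma> lam Fb Sb n (S1 n) 1 = Eb"
      using fS[of 0] fYS1[of 1] n EbE by simp
    ultimately have "rel (S1 n) (Fract r1 r2) Eb" by simp
    from rel_final[OF this reduced]
    have "poly r2 (S1 n) \<noteq> 0" "Eb = poly r1 (S1 n) / poly r2 (S1 n)" by auto
    hence P: "poly (smult Eb r2 - r1) (S1 n) = 0" by simp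
    have C4: "\<forall>i\<in>{1..n}.
          Y0 i = ptm_fY (\<lambda>x. x) \<delta> \<gamma> lam Fb Sb n (S1 n) i \<and>
          1 + \<delta> i * S1 i \<noteq> 0 \<and> S1 (i - 1) \<noteq> 0 \<and>
          F i = Fb i / (1 + \<delta> i * S1 i) \<and>
          Y1 i = \<delta> i * Fb i * S1 i / (1 + \<delta> i * S1 i) \<and>
          S0 i = lam i * Fb i * S1 i / ((1 + \<delta> i * S1 i) * S1 (i - 1))"
    proof
      fix i assume i: "i \<in> {1..n}"
      have nz1: "1 + \<delta> i * S1 i \<noteq> 0" and Fi: "F i = Fb i / (1 + \<delta> i * S1 i)" using B1[OF i] by auto
      have "i - 1 \<le> n" using i by (metis atLeastAtMost_iff diff_le_self le_trans)
      hence nz2: "S1 (i - 1) \<noteq> 0" by (rule B2)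
      have "Y1 i = \<delta> i * Fb i * S1 i / (1 + \<delta> i * S1 i)" using L[OF i] Fi by simp
      moreover have "S0 i = lam i * Fb i * S1 i / ((1 + \<delta> i * S1 i) * S1 (i - 1))"
      proof -
        have "S0 i * S1 (i - 1) = lam i * F i * S1 i" using L[OF i] by simp
        hence "S0 i = lam i * F i * S1 i / S1 (i - 1)" using nz2 by (simp add: field_simps)
        thus ?thesis using Fi by simp
      qed
      ultimately show "Y0 i = ptm_fY (\<lambda>x. x) \<delta> \<gamma> lam Fb Sb n (S1 n) i \<and>
          1 + \<delta> i * S1 i \<noteq> 0 \<and> S1 (i - 1) \<noteq> 0 \<and>
          F i = Fb i / (1 + \<delta> i * S1 i) \<and>
          Y1 i = \<delta> i * Fb i * S1 i / (1 + \<delta> i * S1 i) \<and>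
          S0 i = lam i * Fb i * S1 i / ((1 + \<delta> i * S1 i) * S1 (i - 1))"
        using fYS1[OF i] nz1 nz2 Fi by simp
    qed
    show "poly (smult Eb r2 - r1) (S1 n) = 0 \<and>
       (\<forall>i\<in>{1..n}.
          ptm_d (\<lambda>x. x) \<delta> \<gamma> Fb Sb i (ptm_f (\<lambda>x. x) \<delta> \<gamma> lam Fb Sb n (S1 n) i)
                (ptm_fY (\<lambda>x. x) \<delta> \<gamma> lam Fb Sb n (S1 n) (i + 1)) \<noteq> 0 \<and>
          1 + \<delta> i * ptm_f (\<lambda>x. x) \<delta> \<gamma> lam Fb Sb n (S1 n) i \<noteq> 0) \<and>
       (\<forall>i<n. S1 i = ptm_f (\<lambda>x. x) \<delta> \<gamma> lam Fb Sb n (S1 n) i) \<and>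
       (\<forall>i\<in>{1..n}.
          Y0 i = ptm_fY (\<lambda>x. x) \<delta> \<gamma> lam Fb Sb n (S1 n) i \<and>
          1 + \<delta> i * S1 i \<noteq> 0 \<and> S1 (i - 1) \<noteq> 0 \<and>
          F i = Fb i / (1 + \<delta> i * S1 i) \<and>
          Y1 i = \<delta> i * Fb i * S1 i / (1 + \<delta> i * S1 i) \<and>
          S0 i = lam i * Fb i * S1 i / ((1 + \<delta> i * S1 i) * S1 (i - 1)))"
      using P HS C4 fS by auto
  qed
  show ?thesis using nz main by blast
qed

end
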